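(* Let $\mathfrak{C}\in\{c,B\}$. (a) There is a family of size $2^{\aleph_0}$ of pairs $(X,A)$, $X$ Polish and $A$ a $\Sigma^0_2$ digraph on $X$ of uncountable Borel chromatic number, which is a $\preceq^{inj}_{\mathfrak{C}}$-antichain (pairwise incomparable). (b) There is a sequence $(X_n,A_n)_{n\in\omega}$ of such pairs ($\Sigma^0_2$ digraphs on Polish spaces of uncountable Borel chromatic number) with $(X_n,A_n)\preceq^{inj}_{\mathfrak{C}}(X_{n+1},A_{n+1})$ and $(X_{n+1},A_{n+1})\not\preceq^{inj}_{\mathfrak{C}}(X_n,A_n)$ for every $n$.
   Context: A digraph on $X$ is a relation $A\subseteq X^2$ disjoint from the diagonal. For relations $A$ on $X$, $B$ on $Y$ (Polish), $(X,A)\preceq^{inj}_c(Y,B)$ (resp. $\preceq^{inj}_B$) means there is an injective continuous (resp. Borel) $h:X\to Y$ with $A\subseteq(h\times h)^{-1}(B)$. The Borel chromatic number of a digraph $A$ on Polish $X$ is the least cardinality of a Polish $Y$ admitting a Borel $c:X\to Y$ with $c(x)\neq c(x')$ for $(x,x')\in A$. *)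

theory Defs
  imports "HOL-Analysis.Analysis"
begin

definition Polish_space :: "'a topology \<Rightarrow> bool" where
  "Polish_space X \<longleftrightarrow> completely_metrizable_space X \<and> separable_space X"

definition borel_sets_in :: "'a topology \<Rightarrow> 'a set set" where
  "borel_sets_in X = sigma_sets (topspace X) {U. openin X U}"

definition borel_map :: "'a topology \<Rightarrow> 'b topology \<Rightarrow> ('a \<Rightarrow> 'b) \<Rightarrow> bool" where
  "borel_map X Y h \<longleftrightarrow> h ` topspace X \<subseteq> topspace Y \<and>
     (\<forall>B \<in> borel_sets_in Y. {x \<in> topspace X. h x \<in> B} \<in> borel_sets_in X)"

definition digraph_on :: "'a topology \<Rightarrow> ('a \<times> 'a) set \<Rightarrow> bool" where
  "digraph_on X A \<longleftrightarrow> A \<subseteq> topspace X \<times> topspace X \<and> (\<forall>x. (x, x) \<notin> A)"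

text \<open>Uncountable Borel chromatic number: no countable Polish space Y admits a Borel
  colouring. Countable spaces are represented (up to homeomorphism) on carriers in nat.\<close>
definition uncountable_borel_chromatic :: "'a topology \<Rightarrow> ('a \<times> 'a) set \<Rightarrow> bool" where
  "uncountable_borel_chromatic X A \<longleftrightarrow>
     \<not> (\<exists>(Y :: nat topology) c. Polish_space Y \<and> borel_map X Y c \<and>
            (\<forall>(x, x') \<in> A. c x \<noteq> c x'))"

datatype reduction_kind = Cont | Bor

definition inj_reducible ::
  "reduction_kind \<Rightarrow> 'a topology \<Rightarrow> ('a \<times> 'a) set \<Rightarrow> 'b topology \<Rightarrow> ('b \<times> 'b) set \<Rightarrow> bool" where
  "inj_reducible k X A Y B \<longleftrightarrow>
     (\<exists>h. (case k of Cont \<Rightarrow> continuous_map X Y h | Bor \<Rightarrow> borel_map X Y h) \<and>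
          inj_on h (topspace X) \<and> (\<forall>(x, x') \<in> A. (h x, h x') \<in> B))"

definition good_pair :: "'a topology \<Rightarrow> ('a \<times> 'a) set \<Rightarrow> bool" where
  "good_pair X A \<longleftrightarrow> Polish_space X \<and> digraph_on X A \<and>
     fsigma_in (prod_topology X X) A \<and> uncountable_borel_chromatic X A"

end

theory Submission imports Defs
begin

definition pt :: "nat \<Rightarrow> nat \<Rightarrow> real" where "pt m j = real (m*m + j)"

definition cyc :: "nat set \<Rightarrow> (real \<times> real) set" where
  "cyc S = {(pt m j, pt m (Suc j mod m)) | m j. m \<in> S \<and> j < m}"

definition symr :: "nat set \<Rightarrow> real \<Rightarrow> real \<Rightarrow> bool" where
  "symr S x y \<longleftrightarrow> (x,y) \<in> cyc S \<or> (y,x) \<in> cyc S"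

definition gr :: "nat set \<Rightarrow> (real \<times> real) set" where
  "gr S = {(x,y). x < y} \<union> {(x,y). y < x \<and> symr S x y}"

lemma pt_inj_nat:
  fixes m m' j j' :: nat
  assumes "j < m" "j' < m'" "m*m + j = m'*m' + j'"
  shows "m = m' \<and> j = j'"
proof -
  have "\<not> m < m'" if "j < m" "m*m + j = m'*m' + j'" for m m' j j' :: nat
  proof
    assume "m < m'"
    then have "Suc m * Suc m \<le> m' * m'" using mult_le_mono Suc_leI by blast
    then show False using that by simp
  qed
  then have "m = m'" using assms by (metis linorder_neqE_nat)
  then show ?thesis using assms by simp
qed

lemma pt_inj: "j < m \<Longrightarrow> j' < m' \<Longrightarrow> pt m j = pt m' j' \<Longrightarrow> m = m' \<and> j = j'"
  unfolding pt_def using pt_inj_nat by (metis of_nat_eq_iff)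

lemma symr_sym: "symr S x y \<Longrightarrow> symr S y x"
  unfolding symr_def by blast

lemma symr_vert: "symr S x y \<Longrightarrow> \<exists>m\<in>S. \<exists>i<m. x = pt m i"
proof -
  have "\<exists>m\<in>S. \<exists>i<m. x = pt m i" if "(x,y) \<in> cyc S \<or> (y,x) \<in> cyc S" for x y
    using that unfolding cyc_def
  proof (elim disjE)
    assume "(x, y) \<in> {(pt m j, pt m (Suc j mod m)) |m j. m \<in> S \<and> j < m}"
    then show ?thesis by blast
  next
    assume "(y, x) \<in> {(pt m j, pt m (Suc j mod m)) |m j. m \<in> S \<and> j < m}"
    then obtain m j where "m \<in> S" "j < m" "x = pt m (Suc j mod m)" by blast
    moreover have "Suc j mod m < m" using \<open>j < m\<close> by simp
    ultimately show ?thesis by blast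
  qed
  then show "symr S x y \<Longrightarrow> ?thesis" unfolding symr_def by blast
qed

lemma mod_pred: "j < (m::nat) \<Longrightarrow> i = Suc j mod m \<Longrightarrow> j = (i + m - 1) mod m"
proof (cases "Suc j < m")
  case True
  assume "i = Suc j mod m" then have "i = Suc j" using True by simp
  then show ?thesis using True by simp
next
  case False
  assume a: "j < m" "i = Suc j mod m"
  then have "Suc j = m" using False by simp
  then have "i = 0" using a by simp
  then show ?thesis using \<open>Suc j = m\<close> by simp
qed

lemma symr_nbr:
  assumes "m \<in> S" "i < m" "symr S (pt m i) y"
  shows "y = pt m (Suc i mod m) \<or> y = pt m ((i + m - 1) mod m)"
proof -
  from assms(3) consider "(pt m i, y) \<in> cyc S" | "(y, pt m i) \<in> cyc S" unfolding symr_def by blast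
  then show ?thesis
  proof cases
    case 1
    then obtain m' j where "m' \<in> S" "j < m'" "pt m i = pt m' j" "y = pt m' (Suc j mod m')"
      unfolding cyc_def by blast
    then show ?thesis using pt_inj[OF assms(2)] by metis
  next
    case 2
    then obtain m' j where "m' \<in> S" "j < m'" "y = pt m' j" "pt m i = pt m' (Suc j mod m')"
      unfolding cyc_def by blast
    moreover have "Suc j mod m' < m'" using \<open>j < m'\<close> by simp
    ultimately have "m = m'" "i = Suc j mod m'" using pt_inj[OF assms(2)] by metis+
    then show ?thesis using mod_pred \<open>j < m'\<close> \<open>y = pt m' j\<close> by metis
  qed
qed

lemma mod_neq3:
  assumes "(3::nat) \<le> k"
  shows "Suc j mod k \<noteq> (j + k - 1) mod k"
proof -
  define a where "a = j mod k"
  have ak: "a < k" using assms a_def by simp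
  have e1: "Suc j mod k = Suc a mod k" by (simp add: a_def mod_Suc_eq)
  have "(j + k - 1) mod k = (a + k - 1) mod k"
    using assms by (metis a_def add_diff_assoc le_add2 le_trans mod_add_left_eq one_le_numeral)
  moreover consider "a = 0" | "a = k - 1" | "0 < a \<and> a < k - 1" using ak by linarith
  then have "Suc a mod k \<noteq> (a + k - 1) mod k"
  proof cases
    case 1 then show ?thesis using assms by simp
  next
    case 2
    then have "a + k - 1 = (k - 2) + k" using assms by simp
    then have "(a + k - 1) mod k = (k - 2) mod k" by (metis mod_add_self2)
    then have "(a + k - 1) mod k = k - 2" using assms by simp
    moreover have "Suc a mod k = 0" using 2 assms by simp
    ultimately show ?thesis using assms by simp
  next
    case 3
    then have "a + k - 1 = (a - 1) + k" by simp
    then have "(a + k - 1) mod k = (a - 1) mod k" by (metis mod_add_self2)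
    moreover have "a - 1 < k" using 3 by linarith
    ultimately have "(a + k - 1) mod k = a - 1" by simp
    moreover have "Suc a < k" using 3 by linarith
    then have "Suc a mod k = Suc a" by simp
    ultimately show ?thesis using 3 by simp
  qed
  ultimately show ?thesis using e1 by simp
qed

lemma rigid:
  assumes k: "k \<in> S" "3 \<le> k" and S': "S' \<subseteq> {3..}" and inj: "inj h"
    and hom: "\<And>x y. symr S x y \<Longrightarrow> symr S' (h x) (h y)"
  shows "k \<in> S'"
proof -
  define g where "g j = h (pt k (j mod k))" for j
  have k0: "0 < k" using k by simp
  have gs: "symr S' (g j) (g (Suc j))" for j
  proof -
    have "(pt k (j mod k), pt k (Suc (j mod k) mod k)) \<in> cyc S"
      unfolding cyc_def using k k0
      by (intro CollectI exI[of _ k] exI[of _ "j mod k"]) simp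
    then have "symr S (pt k (j mod k)) (pt k (Suc j mod k))"
      unfolding symr_def by (simp add: mod_Suc_eq)
    then show ?thesis unfolding g_def by (rule hom)
  qed
  have gmod: "g j = g (j mod k)" for j unfolding g_def by simp
  have ginj: "g a = g b \<Longrightarrow> a mod k = b mod k" for a b
    using inj pt_inj[of "a mod k" k "b mod k" k] k0 unfolding g_def inj_def by auto
  obtain m i0 where m: "m \<in> S'" "i0 < m" "g 0 = pt m i0"
    using symr_vert[OF gs[of 0]] by blast
  have m0: "0 < m" using m by simp
  have inV: "\<exists>i<m. g j = pt m i" for j
  proof (induction j)
    case 0 then show ?case using m by blast
  next
    case (Suc j)
    then obtain i where "i < m" "g j = pt m i" by blast
    then have "g (Suc j) = pt m (Suc i mod m) \<or> g (Suc j) = pt m ((i + m - 1) mod m)"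
      using symr_nbr[OF m(1) \<open>i < m\<close>] gs[of j] by simp
    then show ?case using m0 by (meson mod_less_divisor)
  qed
  have c1: "card (g ` {..<k}) = k"
  proof -
    have "inj_on g {..<k}" unfolding inj_on_def using ginj by (metis lessThan_iff mod_less)
    then show ?thesis by (simp add: card_image)
  qed
  have s1: "g ` {..<k} \<subseteq> pt m ` {..<m}" using inV by blast
  have "k \<le> m"
    by (metis c1 s1 card_image_le card_lessThan card_mono finite_imageI finite_lessThan le_trans)
  have cov: "pt m ((i0 + t) mod m) \<in> range g" for t
  proof (induction t)
    case 0 then show ?case using m by (metis add_0_right mod_less rangeI)
  next
    case (Suc t)
    then obtain j where j: "g j = pt m ((i0 + t) mod m)" by (metis rangeE)
    define i where "i = (i0 + t) mod m"
    have im: "i < m" using m0 i_def by simp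
    have n1: "symr S' (pt m i) (g (Suc j))" using gs[of j] j i_def by simp
    have "symr S' (g (j + k - 1)) (g (Suc (j + k - 1)))" by (rule gs)
    moreover have "Suc (j + k - 1) = j + k" using k0 by simp
    moreover have "g (j + k) = g j" using gmod by (metis mod_add_self2)
    ultimately have n2: "symr S' (pt m i) (g (j + k - 1))" using j i_def symr_sym by metis
    have ne: "g (Suc j) \<noteq> g (j + k - 1)"
      using ginj mod_neq3[OF k(2)] by blast
    have "g (Suc j) = pt m (Suc i mod m) \<or> g (j + k - 1) = pt m (Suc i mod m)"
      using symr_nbr[OF m(1) im n1] symr_nbr[OF m(1) im n2] ne by metis
    moreover have "Suc i mod m = (i0 + Suc t) mod m" unfolding i_def by (simp add: mod_Suc_eq)
    ultimately show ?case by (metis rangeI)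
  qed
  have s2: "pt m ` {..<m} \<subseteq> g ` {..<k}"
  proof
    fix x assume "x \<in> pt m ` {..<m}"
    then obtain i where i: "i < m" "x = pt m i" by blast
    have "(i0 + (i + m - i0)) mod m = i" using i m by simp
    then have "x \<in> range g" using cov[of "i + m - i0"] i by simp
    then obtain j where "x = g j" by blast
    then have "x = g (j mod k)" using gmod by simp
    then show "x \<in> g ` {..<k}" using k0 by simp
  qed
  have "inj_on (pt m) {..<m}" unfolding inj_on_def using pt_inj by blast
  then have "card (pt m ` {..<m}) = m" by (simp add: card_image)
  then have "m \<le> k" using s2 c1 by (metis card_mono finite_imageI finite_lessThan)
  then show ?thesis using \<open>k \<le> m\<close> m by simp
qed

lemma gr_sym: "(x,y) \<in> gr S \<and> (y,x) \<in> gr S \<Longrightarrow> symr S x y"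
proof -
  assume a: "(x,y) \<in> gr S \<and> (y,x) \<in> gr S"
  then consider "x < y" "symr S y x" | "y < x" "symr S x y" | "x = y" unfolding gr_def by auto
  then show ?thesis
  proof cases
    case 1 show ?thesis by (rule symr_sym[OF 1(2)])
  next
    case 2 then show ?thesis by blast
  next
    case 3 then show ?thesis using a unfolding gr_def by auto
  qed
qed

lemma symr_gr:
  assumes "S \<subseteq> {3..}" "symr S x y" shows "(x,y) \<in> gr S"
proof -
  have "x \<noteq> y"
  proof -
    have "pt m j \<noteq> pt m (Suc j mod m)" if "m \<in> S" "j < m" for m j
    proof
      assume "pt m j = pt m (Suc j mod m)"
      moreover have "Suc j mod m < m" using that by simp
      ultimately have e: "j = Suc j mod m" using pt_inj that by blast
      have "m \<ge> 3" using assms that by auto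
      show False
      proof (cases "Suc j < m")
        case True then show False using e by simp
      next
        case False then have "Suc j = m" using that by simp
        then show False using e \<open>m \<ge> 3\<close> by simp
      qed
    qed
    note ne = this
    from assms(2) consider "(x,y) \<in> cyc S" | "(y,x) \<in> cyc S" unfolding symr_def by blast
    then show ?thesis
    proof cases
      case 1
      then obtain m j where "m \<in> S" "j < m" "x = pt m j" "y = pt m (Suc j mod m)"
        unfolding cyc_def by blast
      then show ?thesis using ne by blast
    next
      case 2
      then obtain m j where "m \<in> S" "j < m" "y = pt m j" "x = pt m (Suc j mod m)"
        unfolding cyc_def by blast
      then show ?thesis using ne by metis
    qed
  qed
  then consider "x < y" | "y < x" by (meson linorder_neq_iff)
  then show ?thesis
  proof cases
    case 1 then show ?thesis unfolding gr_def by simp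
  next
    case 2 then show ?thesis unfolding gr_def using assms(2) by simp
  qed
qed

lemma reduce_subset:
  assumes "S \<subseteq> {3..}" "S' \<subseteq> {3..}"
    and "inj_reducible kk (euclidean::real topology) (gr S) euclidean (gr S')"
  shows "S \<subseteq> S'"
proof
  fix k assume k: "k \<in> S"
  from assms(3) obtain h where h: "inj_on h UNIV" "\<forall>(x, x') \<in> gr S. (h x, h x') \<in> gr S'"
    unfolding inj_reducible_def by auto
  have hom: "symr S' (h x) (h y)" if "symr S x y" for x y
  proof -
    have "(x,y) \<in> gr S" by (rule symr_gr[OF assms(1) that])
    moreover have "(y,x) \<in> gr S" by (rule symr_gr[OF assms(1) symr_sym[OF that]])
    ultimately have "(h x, h y) \<in> gr S'" "(h y, h x) \<in> gr S'" using h(2) by auto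
    then show ?thesis using gr_sym by blast
  qed
  have "3 \<le> k" using k assms(1) by auto
  show "k \<in> S'" by (rule rigid[OF k \<open>3 \<le> k\<close> assms(2) h(1) hom])
qed

lemma fs_lt: "fsigma_in euclidean {(x::real,y). x < y}"
proof -
  have o: "open {p::real\<times>real. fst p < snd p}"
    by (intro open_Collect_less continuous_intros)
  have "fsigma_in euclidean {p::real\<times>real. fst p < snd p}"
    by (rule open_imp_fsigma_in[OF metrizable_space_euclidean open_openin[THEN iffD1, OF o]])
  moreover have eqo: "{(x::real,y). x < y} = {p::real\<times>real. fst p < snd p}" by auto
  ultimately show ?thesis by metis
qed

lemma fs_countable:
  fixes R :: "('a::t1_space) set"
  assumes cR: "countable R"
  shows "fsigma_in euclidean R"
proof -
  have Req: "\<Union> ((\<lambda>z. {z}) ` R) = R" by blast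
  have "fsigma_in euclidean (\<Union> ((\<lambda>z. {z}) ` R))"
  proof (rule fsigma_in_Union)
    show "countable ((\<lambda>z. {z}) ` R)" using cR by (rule countable_image)
    fix T assume "T \<in> (\<lambda>z. {z}) ` R"
    then obtain z where "T = {z}" by blast
    have "closed {z}" by (rule closed_singleton)
    then have "closedin euclidean {z}" using closed_closedin by blast
    then show "fsigma_in euclidean T" using \<open>T = {z}\<close> closed_imp_fsigma_in by blast
  qed
  then show ?thesis by (simp only: Req)
qed

definition Rr :: "nat set \<Rightarrow> (real \<times> real) set" where "Rr S = {(x,y). y < x \<and> symr S x y}"

lemma countable_Rr: "countable (Rr S)"
proof -
  have "Rr S \<subseteq> (\<lambda>(a,b). (real a, real b)) ` UNIV"
  proof
    fix z assume "z \<in> Rr S"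
    then obtain x y where z: "z = (x,y)" "symr S x y" unfolding Rr_def by blast
    from symr_vert[OF z(2)] obtain m i where xm: "x = pt m i" by blast
    from symr_vert[OF symr_sym[OF z(2)]] obtain m' i' where ym: "y = pt m' i'" by blast
    show "z \<in> (\<lambda>(a,b). (real a, real b)) ` UNIV" unfolding z xm ym pt_def
      by (rule image_eqI[where x="(m*m+i, m'*m'+i')"]) simp_all
  qed
  moreover have "countable ((\<lambda>(a,b). (real a, real b)) ` (UNIV :: (nat \<times> nat) set))"
    by (rule countable_image) simp
  ultimately show ?thesis by (rule countable_subset)
qed

lemma gr_split: "gr S = {(x::real,y). x < y} \<union> Rr S"
  unfolding gr_def Rr_def by blast

lemma fsigma_gr: "fsigma_in (prod_topology euclidean euclidean) (gr S)"
proof -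
  have "fsigma_in euclidean ({(x::real,y). x < y} \<union> Rr S)"
    using fs_lt fs_countable[OF countable_Rr] by (rule fsigma_in_Un)
  then show ?thesis unfolding prod_topology_euclidean gr_split .
qed

lemma good_gr:
  assumes "S \<subseteq> {3..}"
  shows "good_pair (euclidean::real topology) (gr S)"
  unfolding good_pair_def
proof (intro conjI)
  show "Polish_space (euclidean::real topology)"
    unfolding Polish_space_def separable_space_def
  proof (intro conjI exI[of _ "\<rat>"])
    show "completely_metrizable_space (euclidean::real topology)"
      by (rule completely_metrizable_space_euclidean)
  qed (simp_all add: Rats_closure_real countable_rat)
  show "digraph_on euclidean (gr S)"
    unfolding digraph_on_def gr_def by simp
  show "fsigma_in (prod_topology euclidean euclidean) (gr S)" by (rule fsigma_gr)
  show "uncountable_borel_chromatic euclidean (gr S)"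
    unfolding uncountable_borel_chromatic_def
  proof
    assume "\<exists>(Y :: nat topology) c. Polish_space Y \<and> borel_map euclidean Y c \<and>
            (\<forall>(x, x') \<in> gr S. c x \<noteq> c x')"
    then obtain c :: "real \<Rightarrow> nat" where c0: "\<forall>(x, x') \<in> gr S. c x \<noteq> c x'" by auto
    have c: "c x \<noteq> c y" if "(x,y) \<in> gr S" for x y using c0 that by auto
    have "inj c"
    proof (rule injI, rule ccontr)
      fix x y assume "c x = c y" "x \<noteq> y"
      then consider "x < y" | "y < x" by (meson linorder_neq_iff)
      then show False
      proof cases
        case 1 then have "(x,y) \<in> gr S" unfolding gr_def by simp
        then show False using c[of x y] \<open>c x = c y\<close> by simp
      next
        case 2 then have "(y,x) \<in> gr S" unfolding gr_def by simp
        then show False using c[of y x] \<open>c x = c y\<close> by simp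
      qed
    qed
    then have "countable (UNIV::real set)" unfolding countable_def by (intro exI[of _ c])
    then show False using uncountable_UNIV_real by blast
  qed
qed

lemma gr_mono: "S \<subseteq> S' \<Longrightarrow> gr S \<subseteq> gr S'"
proof -
  assume a: "S \<subseteq> S'"
  then have "cyc S \<subseteq> cyc S'" unfolding cyc_def by blast
  then have "symr S x y \<Longrightarrow> symr S' x y" for x y unfolding symr_def by blast
  then show ?thesis unfolding gr_def by blast
qed

lemma borel_map_id: "borel_map X X id"
  unfolding borel_map_def borel_sets_in_def
proof (intro conjI ballI)
  show "id ` topspace X \<subseteq> topspace X" by simp
  fix B assume B: "B \<in> sigma_sets (topspace X) {U. openin X U}"
  have "{U. openin X U} \<subseteq> Pow (topspace X)" using openin_subset by blast
  then have "B \<subseteq> topspace X" using sigma_sets_into_sp B by blast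
  then have "{x \<in> topspace X. id x \<in> B} = B" by auto
  then show "{x \<in> topspace X. id x \<in> B} \<in> sigma_sets (topspace X) {U. openin X U}"
    using B by simp
qed

lemma reduce_mono:
  assumes "S \<subseteq> S'"
  shows "inj_reducible kk (euclidean::real topology) (gr S) euclidean (gr S')"
  unfolding inj_reducible_def
proof (intro exI[of _ id] conjI)
  show "case kk of Cont \<Rightarrow> continuous_map euclidean euclidean id | Bor \<Rightarrow> borel_map euclidean euclidean id"
    by (cases kk) (simp_all add: borel_map_id)
  show "inj_on id (topspace euclidean)" by simp
  show "\<forall>(x, x')\<in>gr S. (id x, id x') \<in> gr S'" using gr_mono[OF assms] by auto
qed

definition Dr :: "real \<Rightarrow> nat set" where "Dr r = {to_nat q | q::rat. of_rat q < r}"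

definition Tset :: "nat set \<Rightarrow> nat set" where
  "Tset D = (\<lambda>n. n + 3) ` ({2*n | n. n \<in> D} \<union> {2*n+1 | n. n \<notin> D})"

lemma Tset_ge: "Tset D \<subseteq> {3..}"
  unfolding Tset_def by auto

lemma Tset_incomp:
  assumes "n \<in> D" "n \<notin> D'"
  shows "\<not> Tset D \<subseteq> Tset D'"
proof
  assume sub: "Tset D \<subseteq> Tset D'"
  have "2*n + 3 \<in> Tset D" unfolding Tset_def using assms by blast
  then have "2*n + 3 \<in> Tset D'" using sub by blast
  then obtain m where "2*n + 3 = m + 3" "m \<in> {2*n | n. n \<in> D'} \<union> {2*n+1 | n. n \<notin> D'}"
    unfolding Tset_def by blast
  then show False using assms by auto presburger?
qed

lemma Tset_incomp2:
  assumes "n \<in> D" "n \<notin> D'"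
  shows "\<not> Tset D' \<subseteq> Tset D"
proof
  assume sub: "Tset D' \<subseteq> Tset D"
  have "2*n + 1 + 3 \<in> Tset D'" unfolding Tset_def using assms by blast
  then have "2*n + 1 + 3 \<in> Tset D" using sub by blast
  then obtain m where "2*n + 1 + 3 = m + 3" "m \<in> {2*n | n. n \<in> D} \<union> {2*n+1 | n. n \<notin> D}"
    unfolding Tset_def by blast
  then show False using assms by auto presburger?
qed

lemma Dr_sep:
  assumes "r < r'"
  shows "\<exists>n. n \<in> Dr r' \<and> n \<notin> Dr r"
proof -
  obtain q :: rat where q: "r < of_rat q" "of_rat q < r'" using of_rat_dense[OF assms] by blast
  have "to_nat q \<in> Dr r'" unfolding Dr_def using q by blast
  moreover have "to_nat q \<notin> Dr r"
  proof
    assume "to_nat q \<in> Dr r"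
    then obtain q' :: rat where "to_nat q' = to_nat q" "of_rat q' < r" unfolding Dr_def mem_Collect_eq by metis
    then have "q' = q" using inj_to_nat by (metis injD)
    then show False using q \<open>of_rat q' < r\<close> by simp
  qed
  ultimately show ?thesis by blast
qed

lemma Dr_incomp:
  assumes "i \<noteq> j" shows "\<not> Tset (Dr i) \<subseteq> Tset (Dr j)"
proof -
  from assms consider "i < j" | "j < i" by (meson linorder_neq_iff)
  then show ?thesis
  proof cases
    case 1
    then obtain n where "n \<in> Dr j" "n \<notin> Dr i" using Dr_sep by blast
    then show ?thesis by (rule Tset_incomp2)
  next
    case 2
    then obtain n where "n \<in> Dr i" "n \<notin> Dr j" using Dr_sep by blast
    then show ?thesis by (rule Tset_incomp)
  qed
qed

theorem theorem1p4:
  fixes k :: reduction_kind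
  shows "(\<exists>F :: real \<Rightarrow> real topology \<times> (real \<times> real) set.
            (\<forall>i. good_pair (fst (F i)) (snd (F i))) \<and>
            (\<forall>i j. i \<noteq> j \<longrightarrow>
               \<not> inj_reducible k (fst (F i)) (snd (F i)) (fst (F j)) (snd (F j))))
       \<and> (\<exists>S :: nat \<Rightarrow> real topology \<times> (real \<times> real) set.
            (\<forall>n. good_pair (fst (S n)) (snd (S n))) \<and>
            (\<forall>n. inj_reducible k (fst (S n)) (snd (S n)) (fst (S (Suc n))) (snd (S (Suc n))) \<and>
                 \<not> inj_reducible k (fst (S (Suc n))) (snd (S (Suc n))) (fst (S n)) (snd (S n))))"
proof (intro conjI)
  show "\<exists>F :: real \<Rightarrow> real topology \<times> (real \<times> real) set.
            (\<forall>i. good_pair (fst (F i)) (snd (F i))) \<and>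
            (\<forall>i j. i \<noteq> j \<longrightarrow>
               \<not> inj_reducible k (fst (F i)) (snd (F i)) (fst (F j)) (snd (F j)))"
  proof (intro exI[of _ "\<lambda>i. (euclidean, gr (Tset (Dr i)))"] conjI allI impI)
    fix i show "good_pair (fst (euclidean::real topology, gr (Tset (Dr i)))) (snd (euclidean::real topology, gr (Tset (Dr i))))"
      using good_gr[OF Tset_ge] by simp
  next
    fix i j :: real assume "i \<noteq> j"
    show "\<not> inj_reducible k (fst (euclidean::real topology, gr (Tset (Dr i)))) (snd (euclidean::real topology, gr (Tset (Dr i))))
             (fst (euclidean::real topology, gr (Tset (Dr j)))) (snd (euclidean::real topology, gr (Tset (Dr j))))"
      using reduce_subset[OF Tset_ge Tset_ge] Dr_incomp[OF \<open>i \<noteq> j\<close>] by auto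
  qed
  show "\<exists>S :: nat \<Rightarrow> real topology \<times> (real \<times> real) set.
            (\<forall>n. good_pair (fst (S n)) (snd (S n))) \<and>
            (\<forall>n. inj_reducible k (fst (S n)) (snd (S n)) (fst (S (Suc n))) (snd (S (Suc n))) \<and>
                 \<not> inj_reducible k (fst (S (Suc n))) (snd (S (Suc n))) (fst (S n)) (snd (S n)))"
  proof (intro exI[of _ "\<lambda>n. (euclidean, gr {3..n+3})"] conjI allI)
    fix n :: nat
    show "good_pair (fst (euclidean::real topology, gr {3..n+3})) (snd (euclidean::real topology, gr {3..n+3}))"
      using good_gr[of "{3..n+3}"] by simp
    show "inj_reducible k (fst (euclidean::real topology, gr {3..n+3})) (snd (euclidean::real topology, gr {3..n+3}))
           (fst (euclidean::real topology, gr {3..Suc n+3})) (snd (euclidean::real topology, gr {3..Suc n+3}))"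
      using reduce_mono[of "{3..n+3}" "{3..Suc n+3}" k] by simp
    have "\<not> {3..Suc n+3} \<subseteq> {3..n+3}" by simp
    then show "\<not> inj_reducible k (fst (euclidean::real topology, gr {3..Suc n+3})) (snd (euclidean::real topology, gr {3..Suc n+3}))
           (fst (euclidean::real topology, gr {3..n+3})) (snd (euclidean::real topology, gr {3..n+3}))"
      using reduce_subset[of "{3..Suc n+3}" "{3..n+3}" k] by auto
  qed
qed

end
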